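(* Suppose $|\Omega| = |A| = 2$. Let $\Sigma$ be a canonical ambiguous experiment (a nonempty closed convex set of maps $\sigma: \Omega \to \Delta(A)$) with $\tau^{*} \in BR(\Sigma)$. Then there exists $\sigma \in \Sigma$ with $\tau^{*} \in BR(\sigma)$.
   Context: Setting: $\Omega$ is a finite set of states, $A$ a finite set of receiver actions. Sender and receiver share a set of priors $P \subseteq \Delta(\Omega)$, nonempty, closed and convex; the receiver has maxmin expected utility preferences with payoff $u_r : A \times \Omega \to \mathbb{R}$. A canonical experiment is a map $\sigma: \Omega \to \Delta(A)$, written $\sigma(a\mid\omega)$. A receiver strategy is $\tau: A \to \Delta(A)$. For $p \in P$, $u_r(p,\sigma,\tau) = \sum_{\omega,m,a} p(\omega)\sigma(m\mid\omega)\tau(a\mid m)u_r(a,\omega)$ and $u_r(\sigma,\tau) = \min_{p\in P} u_r(p,\sigma,\tau)$. For a canonical ambiguous experiment $\Sigma$, $U_r(\Sigma,\tau) = \min_{\sigma \in \Sigma} u_r(\sigma,\tau)$. Best responses: $BR(\sigma) = \arg\max_{\tau} u_r(\sigma,\tau)$ and $BR(\Sigma) = \arg\max_{\tau} U_r(\Sigma,\tau)$, over all $\tau: A \to \Delta(A)$. The obedient strategy $\tau^{*}$ is $\tau^{*}(a\mid a)=1$ for all $a \in A$. *)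

theory Defs
  imports "HOL-Analysis.Analysis"
begin

definition is_dist :: "real ^ 'n \<Rightarrow> bool" where
  "is_dist p \<longleftrightarrow> (\<forall>i. 0 \<le> p $ i) \<and> (\<Sum>i\<in>UNIV. p $ i) = 1"

text \<open>Canonical experiment sigma : Omega -> Delta(A); row w is the distribution
  over messages (= actions) in state w, i.e. sigma(m|w).\<close>
definition canon_experiment :: "real ^ 'a ^ 'w \<Rightarrow> bool" where
  "canon_experiment \<sigma> \<longleftrightarrow> (\<forall>w. is_dist (\<sigma> $ w))"

text \<open>Receiver strategy tau : A -> Delta(A), entry (m,a) is tau(a|m).\<close>
definition strategy :: "real ^ 'a ^ 'a \<Rightarrow> bool" where
  "strategy \<tau> \<longleftrightarrow> (\<forall>m. is_dist (\<tau> $ m))"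

definition ur_p :: "('a \<Rightarrow> 'w \<Rightarrow> real) \<Rightarrow> real ^ 'w \<Rightarrow> real ^ 'a ^ 'w \<Rightarrow> real ^ 'a ^ 'a \<Rightarrow> real" where
  "ur_p u p \<sigma> \<tau> = (\<Sum>w\<in>UNIV. \<Sum>m\<in>UNIV. \<Sum>a\<in>UNIV. p $ w * \<sigma> $ w $ m * \<tau> $ m $ a * u a w)"

text \<open>Maxmin payoff: minimum over priors (attained since P is compact).\<close>
definition ur :: "('a \<Rightarrow> 'w \<Rightarrow> real) \<Rightarrow> (real ^ 'w) set \<Rightarrow> real ^ 'a ^ 'w \<Rightarrow> real ^ 'a ^ 'a \<Rightarrow> real" where
  "ur u P \<sigma> \<tau> = (INF p\<in>P. ur_p u p \<sigma> \<tau>)"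

definition UR :: "('a \<Rightarrow> 'w \<Rightarrow> real) \<Rightarrow> (real ^ 'w) set \<Rightarrow> (real ^ 'a ^ 'w) set \<Rightarrow> real ^ 'a ^ 'a \<Rightarrow> real" where
  "UR u P S \<tau> = (INF \<sigma>\<in>S. ur u P \<sigma> \<tau>)"

definition BR :: "('a \<Rightarrow> 'w \<Rightarrow> real) \<Rightarrow> (real ^ 'w) set \<Rightarrow> real ^ 'a ^ 'w \<Rightarrow> (real ^ 'a ^ 'a) set" where
  "BR u P \<sigma> = {\<tau>. strategy \<tau> \<and> (\<forall>\<tau>'. strategy \<tau>' \<longrightarrow> ur u P \<sigma> \<tau>' \<le> ur u P \<sigma> \<tau>)}"

definition BR_amb :: "('a \<Rightarrow> 'w \<Rightarrow> real) \<Rightarrow> (real ^ 'w) set \<Rightarrow> (real ^ 'a ^ 'w) set \<Rightarrow> (real ^ 'a ^ 'a) set" where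
  "BR_amb u P S = {\<tau>. strategy \<tau> \<and> (\<forall>\<tau>'. strategy \<tau>' \<longrightarrow> UR u P S \<tau>' \<le> UR u P S \<tau>)}"

definition obedient :: "real ^ 'a ^ 'a" where
  "obedient = (\<chi> m a. if a = m then 1 else 0)"

end

theory Submission
  imports Defs
begin

definition Wf :: "('a \<Rightarrow> 'w \<Rightarrow> real) \<Rightarrow> 'a \<Rightarrow> 'a \<Rightarrow> real ^ 'w \<Rightarrow> real ^ 'a ^ 'w \<Rightarrow> real" where
  "Wf u a1 a2 p \<sigma> = (\<Sum>w\<in>UNIV. p$w * (\<sigma>$w$a1 * u a1 w + \<sigma>$w$a2 * u a2 w))"
definition Af :: "('a \<Rightarrow> 'w \<Rightarrow> real) \<Rightarrow> 'a \<Rightarrow> 'a \<Rightarrow> real ^ 'w \<Rightarrow> real ^ 'a ^ 'w \<Rightarrow> real" where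
  "Af u a1 a2 p \<sigma> = (\<Sum>w\<in>UNIV. p$w * \<sigma>$w$a1 * (u a1 w - u a2 w))"
definition Bf :: "('a \<Rightarrow> 'w \<Rightarrow> real) \<Rightarrow> 'a \<Rightarrow> 'a \<Rightarrow> real ^ 'w \<Rightarrow> real ^ 'a ^ 'w \<Rightarrow> real" where
  "Bf u a1 a2 p \<sigma> = (\<Sum>w\<in>UNIV. p$w * \<sigma>$w$a2 * (u a1 w - u a2 w))"
definition Cf :: "('a \<Rightarrow> 'w \<Rightarrow> real) \<Rightarrow> 'a \<Rightarrow> 'a \<Rightarrow> real ^ 'w \<Rightarrow> real" where
  "Cf u a1 a2 p = (\<Sum>w\<in>UNIV. p$w * u a2 w)"
definition Df :: "('a \<Rightarrow> 'w \<Rightarrow> real) \<Rightarrow> 'a \<Rightarrow> 'a \<Rightarrow> real ^ 'w \<Rightarrow> real" where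
  "Df u a1 a2 p = (\<Sum>w\<in>UNIV. p$w * (u a1 w - u a2 w))"

lemma two_elems:
  assumes "CARD('a::finite) = 2"
  shows "\<exists>a1 a2::'a. a1 \<noteq> a2 \<and> UNIV = {a1, a2}"
  using assms unfolding card_2_iff by blast

lemma sum_two:
  assumes "a1 \<noteq> a2" "(UNIV::'a set) = {a1, a2}"
  shows "(\<Sum>a\<in>(UNIV::'a set). f a) = f a1 + (f a2 :: real)"
  unfolding assms(2) using assms(1) by simp

lemma dist_two:
  assumes "a1 \<noteq> a2" "(UNIV::'a set) = {a1, a2}" "is_dist (x :: real ^ 'a)"
  shows "x$a2 = 1 - x$a1" "0 \<le> x$a1" "x$a1 \<le> 1"
proof -
  have h: "\<forall>i. 0 \<le> x$i" "x$a1 + x$a2 = 1"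
    using assms(3) by (auto simp: is_dist_def sum_two[OF assms(1,2)])
  have "0 \<le> x$a2" using h(1) by blast
  moreover have "0 \<le> x$a1" using h(1) by blast
  ultimately show "x$a2 = 1 - x$a1" "0 \<le> x$a1" "x$a1 \<le> 1" using h(2) by linarith+
qed

lemma ur_p_form:
  assumes "a1 \<noteq> a2" "(UNIV::'a set) = {a1, a2}" "strategy (\<tau> :: real^'a^'a)"
  shows "ur_p u p \<sigma> \<tau> = Wf u a1 a2 p \<sigma> - (1 - \<tau>$a1$a1) * Af u a1 a2 p \<sigma> + \<tau>$a2$a1 * Bf u a1 a2 p \<sigma>"
proof -
  have t1: "\<tau>$a1$a2 = 1 - \<tau>$a1$a1" and t2: "\<tau>$a2$a2 = 1 - \<tau>$a2$a1"
    using assms dist_two[OF assms(1,2)] unfolding strategy_def by blast+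
  have "ur_p u p \<sigma> \<tau> = (\<Sum>w\<in>UNIV. p$w * \<sigma>$w$a1 * \<tau>$a1$a1 * u a1 w + p$w * \<sigma>$w$a1 * \<tau>$a1$a2 * u a2 w
     + (p$w * \<sigma>$w$a2 * \<tau>$a2$a1 * u a1 w + p$w * \<sigma>$w$a2 * \<tau>$a2$a2 * u a2 w))"
    unfolding ur_p_def by (simp add: sum_two[OF assms(1,2)])
  also have "\<dots> = (\<Sum>w\<in>UNIV. p$w * (\<sigma>$w$a1 * u a1 w + \<sigma>$w$a2 * u a2 w)
      - (1 - \<tau>$a1$a1) * (p$w * \<sigma>$w$a1 * (u a1 w - u a2 w)) + \<tau>$a2$a1 * (p$w * \<sigma>$w$a2 * (u a1 w - u a2 w)))"
    by (rule sum.cong) (auto simp: t1 t2 algebra_simps)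
  also have "\<dots> = Wf u a1 a2 p \<sigma> - (1 - \<tau>$a1$a1) * Af u a1 a2 p \<sigma> + \<tau>$a2$a1 * Bf u a1 a2 p \<sigma>"
    unfolding Wf_def Af_def Bf_def by (simp add: sum.distrib sum_subtractf sum_distrib_left)
  finally show ?thesis .
qed

lemma ur_p_alt: "ur_p u p \<sigma> \<tau> = (\<Sum>w\<in>UNIV. p$w * (\<Sum>m\<in>UNIV. \<Sum>a\<in>UNIV. \<sigma> $ w $ m * \<tau> $ m $ a * u a w))"
  unfolding ur_p_def by (simp add: sum_distrib_left mult.assoc)

lemma lin_gen: "(\<Sum>w\<in>UNIV. ((1 - m) *\<^sub>R p + m *\<^sub>R q)$w * (c w::real)) = (1 - m) * (\<Sum>w\<in>UNIV. p$w * c w) + m * (\<Sum>w\<in>UNIV. q$w * c w)"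
  by (simp add: sum_distrib_left sum.distrib[symmetric] algebra_simps)

lemma ur_p_lin:
  "ur_p u ((1 - m) *\<^sub>R p + m *\<^sub>R q) \<sigma> \<tau> = (1 - m) * ur_p u p \<sigma> \<tau> + m * ur_p u q \<sigma> \<tau>"
  unfolding ur_p_alt by (rule lin_gen)

lemma Wf_lin_p: "Wf u a1 a2 ((1 - m) *\<^sub>R p + m *\<^sub>R q) \<sigma> = (1 - m) * Wf u a1 a2 p \<sigma> + m * Wf u a1 a2 q \<sigma>"
  unfolding Wf_def by (rule lin_gen)
lemma Af_lin_p: "Af u a1 a2 ((1 - m) *\<^sub>R p + m *\<^sub>R q) \<sigma> = (1 - m) * Af u a1 a2 p \<sigma> + m * Af u a1 a2 q \<sigma>"
  unfolding Af_def mult.assoc by (rule lin_gen)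
lemma Bf_lin_p: "Bf u a1 a2 ((1 - m) *\<^sub>R p + m *\<^sub>R q) \<sigma> = (1 - m) * Bf u a1 a2 p \<sigma> + m * Bf u a1 a2 q \<sigma>"
  unfolding Bf_def mult.assoc by (rule lin_gen)
lemma Wf_lin_s: "Wf u a1 a2 p ((1 - m) *\<^sub>R x + m *\<^sub>R y) = (1 - m) * Wf u a1 a2 p x + m * Wf u a1 a2 p y"
  unfolding Wf_def by (simp add: sum_distrib_left sum.distrib[symmetric] algebra_simps)
lemma Af_lin_s: "Af u a1 a2 p ((1 - m) *\<^sub>R x + m *\<^sub>R y) = (1 - m) * Af u a1 a2 p x + m * Af u a1 a2 p y"
  unfolding Af_def by (simp add: sum_distrib_left sum.distrib[symmetric] algebra_simps)
lemma Bf_lin_s: "Bf u a1 a2 p ((1 - m) *\<^sub>R x + m *\<^sub>R y) = (1 - m) * Bf u a1 a2 p x + m * Bf u a1 a2 p y"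
  unfolding Bf_def by (simp add: sum_distrib_left sum.distrib[symmetric] algebra_simps)

lemma canon_WA:
  assumes "a1 \<noteq> a2" "(UNIV::'a set) = {a1, a2}" "canon_experiment (\<sigma> :: real^'a^'w)"
  shows "Wf u a1 a2 p \<sigma> = Cf u a1 a2 p + Af u a1 a2 p \<sigma>"
    "Bf u a1 a2 p \<sigma> = Df u a1 a2 p - Af u a1 a2 p \<sigma>"
proof -
  have s: "\<And>w. \<sigma>$w$a2 = 1 - \<sigma>$w$a1"
    using assms dist_two[OF assms(1,2)] unfolding canon_experiment_def by blast
  show "Wf u a1 a2 p \<sigma> = Cf u a1 a2 p + Af u a1 a2 p \<sigma>"
    unfolding Wf_def Cf_def Af_def by (simp add: s sum.distrib[symmetric] algebra_simps)
  show "Bf u a1 a2 p \<sigma> = Df u a1 a2 p - Af u a1 a2 p \<sigma>"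
    unfolding Bf_def Df_def Af_def by (simp add: s sum_subtractf[symmetric] algebra_simps)
qed

lemma P_seg:
  fixes P :: "(real^'w::finite) set"
  assumes "CARD('w) = 2" "P \<noteq> {}" "closed P" "\<forall>p\<in>P. is_dist p"
  shows "\<exists>p0\<in>P. \<exists>p1\<in>P. \<forall>p\<in>P. \<exists>m. 0 \<le> m \<and> m \<le> 1 \<and> p = (1 - m) *\<^sub>R p0 + m *\<^sub>R p1"
proof -
  obtain w1 w2 :: 'w where w: "w1 \<noteq> w2" "UNIV = {w1, w2}" using two_elems[OF assms(1)] by blast
  have allw: "\<And>i. i = w1 \<or> i = w2" using w(2) by blast
  have "bounded P" unfolding bounded_iff
  proof (intro exI ballI)
    fix p assume "p \<in> P"
    then have d: "is_dist p" using assms(4) by blast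
    have "norm p \<le> (\<Sum>i\<in>UNIV. \<bar>p$i\<bar>)" by (rule norm_le_l1_cart)
    also have "\<dots> = (\<Sum>i\<in>UNIV. p$i)" using d unfolding is_dist_def by simp
    also have "\<dots> = 1" using d unfolding is_dist_def by simp
    finally show "norm p \<le> 1" .
  qed
  then have cP: "compact P" using assms(3) by (simp add: compact_eq_bounded_closed)
  have cont: "continuous_on P (\<lambda>p. p$w1)" by (intro continuous_on_component continuous_on_id)
  obtain p0 where p0: "p0 \<in> P" "\<forall>y\<in>P. p0$w1 \<le> y$w1"
    using continuous_attains_inf[OF cP assms(2) cont] by blast
  obtain p1 where p1: "p1 \<in> P" "\<forall>y\<in>P. y$w1 \<le> p1$w1"
    using continuous_attains_sup[OF cP assms(2) cont] by blast
  have two: "\<And>p. p \<in> P \<Longrightarrow> p$w2 = 1 - p$w1"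
    using dist_two[OF w] assms(4) by blast
  have "\<forall>p\<in>P. \<exists>m. 0 \<le> m \<and> m \<le> 1 \<and> p = (1 - m) *\<^sub>R p0 + m *\<^sub>R p1"
  proof
    fix p assume pP: "p \<in> P"
    have l: "p0$w1 \<le> p$w1" "p$w1 \<le> p1$w1" using p0 p1 pP by auto
    show "\<exists>m. 0 \<le> m \<and> m \<le> 1 \<and> p = (1 - m) *\<^sub>R p0 + m *\<^sub>R p1"
    proof (cases "p1$w1 = p0$w1")
      case True
      have "p = p0"
        unfolding vec_eq_iff
      proof
        fix i show "p $ i = p0 $ i"
          using allw[of i] l True two[OF pP] two[OF p0(1)] by auto
      qed
      then show ?thesis by (intro exI[of _ 0]) simp
    next
      case False
      define m where "m = (p$w1 - p0$w1) / (p1$w1 - p0$w1)"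
      have pos: "p1$w1 - p0$w1 > 0" using False l by auto
      have m01: "0 \<le> m" "m \<le> 1" unfolding m_def using l pos by (auto simp: field_simps)
      have mm: "m * (p1$w1 - p0$w1) = p$w1 - p0$w1" unfolding m_def using pos by simp
      have e1: "p$w1 = (1 - m) * p0$w1 + m * p1$w1"
        using mm by (simp add: algebra_simps)
      have e2: "p$w2 = (1 - m) * p0$w2 + m * p1$w2"
        unfolding two[OF pP] two[OF p0(1)] two[OF p1(1)] e1 by (simp add: algebra_simps)
      have "p = (1 - m) *\<^sub>R p0 + m *\<^sub>R p1"
        unfolding vec_eq_iff
      proof
        fix i show "p $ i = ((1 - m) *\<^sub>R p0 + m *\<^sub>R p1) $ i"
          using allw[of i] e1 e2 by auto
      qed
      then show ?thesis using m01 by blast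
    qed
  qed
  then show ?thesis using p0(1) p1(1) by blast
qed

lemma ur_min:
  assumes "p0 \<in> P" "p1 \<in> P" "\<forall>p\<in>P. \<exists>m. 0 \<le> m \<and> m \<le> 1 \<and> p = (1 - m) *\<^sub>R p0 + m *\<^sub>R p1"
  shows "ur u P \<sigma> \<tau> = min (ur_p u p0 \<sigma> \<tau>) (ur_p u p1 \<sigma> \<tau>)"
  unfolding ur_def
proof (rule cInf_eq_minimum)
  show "min (ur_p u p0 \<sigma> \<tau>) (ur_p u p1 \<sigma> \<tau>) \<in> (\<lambda>p. ur_p u p \<sigma> \<tau>) ` P"
    using assms(1,2) by (auto simp: min_def)
next
  fix x assume "x \<in> (\<lambda>p. ur_p u p \<sigma> \<tau>) ` P"
  then obtain p where "p \<in> P" "x = ur_p u p \<sigma> \<tau>" by blast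
  then obtain m where m: "0 \<le> m" "m \<le> 1" "p = (1 - m) *\<^sub>R p0 + m *\<^sub>R p1" using assms(3) by blast
  have "x = (1 - m) * ur_p u p0 \<sigma> \<tau> + m * ur_p u p1 \<sigma> \<tau>" using m \<open>x = _\<close> by (simp add: ur_p_lin)
  moreover have "min (ur_p u p0 \<sigma> \<tau>) (ur_p u p1 \<sigma> \<tau>) \<le> (1 - m) * ur_p u p0 \<sigma> \<tau> + m * ur_p u p1 \<sigma> \<tau>"
  proof -
    let ?a = "ur_p u p0 \<sigma> \<tau>" and ?b = "ur_p u p1 \<sigma> \<tau>"
    have "(1 - m) * min ?a ?b \<le> (1 - m) * ?a" using m by (intro mult_left_mono) auto
    moreover have "m * min ?a ?b \<le> m * ?b" using m by (intro mult_left_mono) auto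
    ultimately show ?thesis by (simp add: algebra_simps)
  qed
  ultimately show "min (ur_p u p0 \<sigma> \<tau>) (ur_p u p1 \<sigma> \<tau>) \<le> x" by simp
qed

lemma S_compact:
  fixes S :: "(real^'a::finite^'w::finite) set"
  assumes "closed S" "\<forall>\<sigma>\<in>S. canon_experiment \<sigma>"
  shows "compact S"
proof -
  have "bounded S" unfolding bounded_iff
  proof (intro exI ballI)
    fix \<sigma> assume "\<sigma> \<in> S"
    then have d: "\<And>w. is_dist (\<sigma>$w)" using assms(2) unfolding canon_experiment_def by blast
    have nw: "norm (\<sigma>$w) \<le> 1" for w
    proof -
      have "norm (\<sigma>$w) \<le> (\<Sum>i\<in>UNIV. \<bar>\<sigma>$w$i\<bar>)" by (rule norm_le_l1_cart)
      also have "\<dots> = (\<Sum>i\<in>UNIV. \<sigma>$w$i)" using d[of w] unfolding is_dist_def by simp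
      also have "\<dots> = 1" using d[of w] unfolding is_dist_def by simp
      finally show ?thesis .
    qed
    have "norm \<sigma> \<le> (\<Sum>w\<in>UNIV. norm (\<sigma>$w))" unfolding norm_vec_def by (rule L2_set_le_sum) simp
    also have "\<dots> \<le> (\<Sum>w\<in>(UNIV::'w set). 1)" by (rule sum_mono) (rule nw)
    finally show "norm \<sigma> \<le> real CARD('w)" by simp
  qed
  then show ?thesis using assms(1) by (simp add: compact_eq_bounded_closed)
qed

lemma min_comb:
  assumes "0 \<le> m" "m \<le> 1"
  shows "min a b \<le> (1 - m) * a + m * (b::real)"
proof -
  have "(1 - m) * min a b \<le> (1 - m) * a" using assms by (intro mult_left_mono) auto
  moreover have "m * min a b \<le> m * b" using assms by (intro mult_left_mono) auto
  ultimately show ?thesis by (simp add: algebra_simps)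
qed

lemma strategy_obedient:
  shows "strategy (obedient :: real^'a::finite^'a)"
  unfolding strategy_def is_dist_def obedient_def by (simp add: if_distrib)

lemma ur_p_obed:
  assumes "a1 \<noteq> a2" "(UNIV::'a::finite set) = {a1, a2}"
  shows "ur_p u p \<sigma> (obedient :: real^'a^'a) = Wf u a1 a2 p \<sigma>"
  using ur_p_form[OF assms strategy_obedient] assms(1) by (simp add: obedient_def)

lemma good:
  assumes a: "a1 \<noteq> a2" "(UNIV::'a::finite set) = {a1, a2}"
    and seg: "p0 \<in> P" "p1 \<in> P" "\<forall>p\<in>P. \<exists>m. 0 \<le> m \<and> m \<le> 1 \<and> p = (1 - m) *\<^sub>R p0 + m *\<^sub>R p1"
    and p: "p \<in> P" "\<forall>p'\<in>P. Wf u a1 a2 p \<sigma> \<le> Wf u a1 a2 p' \<sigma>"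
    and AB: "0 \<le> Af u a1 a2 p \<sigma>" "Bf u a1 a2 p \<sigma> \<le> 0"
  shows "(obedient :: real^'a^'a) \<in> BR u P \<sigma>"
  unfolding BR_def
proof (intro CollectI conjI allI impI strategy_obedient)
  fix \<tau>' :: "real^'a^'a" assume st: "strategy \<tau>'"
  obtain m where m: "0 \<le> m" "m \<le> 1" "p = (1 - m) *\<^sub>R p0 + m *\<^sub>R p1" using seg(3) p(1) by blast
  have "ur u P \<sigma> \<tau>' = min (ur_p u p0 \<sigma> \<tau>') (ur_p u p1 \<sigma> \<tau>')" by (rule ur_min[OF seg])
  also have "\<dots> \<le> ur_p u p \<sigma> \<tau>'" using min_comb[OF m(1,2)] m(3) by (simp add: ur_p_lin)
  also have "\<dots> = Wf u a1 a2 p \<sigma> - (1 - \<tau>'$a1$a1) * Af u a1 a2 p \<sigma> + \<tau>'$a2$a1 * Bf u a1 a2 p \<sigma>"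
    by (rule ur_p_form[OF a st])
  also have "\<dots> \<le> Wf u a1 a2 p \<sigma>"
  proof -
    have "\<tau>'$a1$a1 \<le> 1" "0 \<le> \<tau>'$a2$a1" using st dist_two[OF a] unfolding strategy_def by blast+
    then have "0 \<le> (1 - \<tau>'$a1$a1) * Af u a1 a2 p \<sigma>" "\<tau>'$a2$a1 * Bf u a1 a2 p \<sigma> \<le> 0"
      using AB by (auto intro: mult_nonneg_nonneg mult_nonneg_nonpos)
    then show ?thesis by linarith
  qed
  also have "\<dots> \<le> min (Wf u a1 a2 p0 \<sigma>) (Wf u a1 a2 p1 \<sigma>)" using p(2) seg(1,2) by auto
  also have "\<dots> = ur u P \<sigma> obedient" using ur_min[OF seg, of u \<sigma> obedient] ur_p_obed[OF a, of u p0 \<sigma>] ur_p_obed[OF a, of u p1 \<sigma>] by simp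
  finally show "ur u P \<sigma> \<tau>' \<le> ur u P \<sigma> obedient" .
qed

theorem mainTheorem4:
  fixes u :: "'a::finite \<Rightarrow> 'w::finite \<Rightarrow> real"
    and P :: "(real ^ 'w) set"
    and S :: "(real ^ 'a ^ 'w) set"
  assumes "CARD('w) = 2" and "CARD('a) = 2"
    and "P \<noteq> {}" and "closed P" and "convex P" and "\<forall>p\<in>P. is_dist p"
    and "S \<noteq> {}" and "closed S" and "convex S" and "\<forall>\<sigma>\<in>S. canon_experiment \<sigma>"
    and "obedient \<in> BR_amb u P S"
  shows "\<exists>\<sigma>\<in>S. obedient \<in> BR u P \<sigma>"
proof -
  obtain a1 a2 :: 'a where a: "a1 \<noteq> a2" "UNIV = {a1, a2}" using two_elems[OF assms(2)] by blast
  obtain p0 p1 where seg: "p0 \<in> P" "p1 \<in> P" "\<forall>p\<in>P. \<exists>m. 0 \<le> m \<and> m \<le> 1 \<and> p = (1 - m) *\<^sub>R p0 + m *\<^sub>R p1"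
    using P_seg[OF assms(1,3,4,6)] by blast
  have cS: "compact S" using S_compact[OF assms(8,10)] .
  let ?W = "Wf u a1 a2" and ?A = "Af u a1 a2" and ?B = "Bf u a1 a2"
  define g where "g \<sigma> = min (?W p0 \<sigma>) (?W p1 \<sigma>)" for \<sigma>
  have contg: "continuous_on S g" unfolding g_def Wf_def by (intro continuous_intros)
  obtain x0 where x0: "x0 \<in> S" "\<forall>y\<in>S. g x0 \<le> g y"
    using continuous_attains_inf[OF cS assms(7) contg] by blast
  define v where "v = g x0"
  have v0: "v \<le> ?W p0 \<sigma>" "v \<le> ?W p1 \<sigma>" if "\<sigma> \<in> S" for \<sigma>
    using x0(2) that unfolding v_def g_def by fastforce+
  have vP: "v \<le> ?W p \<sigma>" if sS: "\<sigma> \<in> S" and pP: "p \<in> P" for \<sigma> p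
  proof -
    obtain m where m: "0 \<le> m" "m \<le> 1" "p = (1 - m) *\<^sub>R p0 + m *\<^sub>R p1" using seg(3) pP by blast
    have "v \<le> min (?W p0 \<sigma>) (?W p1 \<sigma>)" using v0[OF sS] by simp
    also have "\<dots> \<le> ?W p \<sigma>" using min_comb[OF m(1,2)] m(3) by (simp add: Wf_lin_p)
    finally show ?thesis .
  qed
  have urg: "ur u P \<sigma> obedient = g \<sigma>" for \<sigma>
    using ur_min[OF seg, of u \<sigma> obedient] ur_p_obed[OF a, of u p0 \<sigma>] ur_p_obed[OF a, of u p1 \<sigma>]
    unfolding g_def by simp
  have URob: "UR u P S obedient \<le> v"
  proof -
    have "bdd_below ((\<lambda>\<sigma>. ur u P \<sigma> obedient) ` S)"
      unfolding bdd_below_def urg using x0(2) by blast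
    then have "UR u P S obedient \<le> ur u P x0 obedient"
      unfolding UR_def by (rule cINF_lower) (rule x0(1))
    then show ?thesis unfolding urg v_def .
  qed
  define F0 where "F0 \<sigma> = (?W p0 \<sigma> - v, ?A p0 \<sigma>, ?B p0 \<sigma>)" for \<sigma>
  define F1 where "F1 \<sigma> = (?W p1 \<sigma> - v, ?A p1 \<sigma>, ?B p1 \<sigma>)" for \<sigma>
  have F0lin: "F0 ((1 - m) *\<^sub>R x + m *\<^sub>R y) = (1 - m) *\<^sub>R F0 x + m *\<^sub>R F0 y" for m x y
    unfolding F0_def Wf_lin_s Af_lin_s Bf_lin_s by (simp add: algebra_simps)
  have F1lin: "F1 ((1 - m) *\<^sub>R x + m *\<^sub>R y) = (1 - m) *\<^sub>R F1 x + m *\<^sub>R F1 y" for m x y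
    unfolding F1_def Wf_lin_s Af_lin_s Bf_lin_s by (simp add: algebra_simps)
  have cvx0: "convex (F0 ` S)" unfolding convex_alt
  proof (intro ballI allI impI)
    fix x y m assume "x \<in> F0 ` S" "y \<in> F0 ` S" "0 \<le> m \<and> m \<le> (1::real)"
    then obtain x' y' where "x' \<in> S" "y' \<in> S" "x = F0 x'" "y = F0 y'" by blast
    then show "(1 - m) *\<^sub>R x + m *\<^sub>R y \<in> F0 ` S"
      using assms(9) \<open>0 \<le> m \<and> m \<le> 1\<close> unfolding convex_alt by (metis F0lin image_eqI)
  qed
  have cvx1: "convex (F1 ` S)" unfolding convex_alt
  proof (intro ballI allI impI)
    fix x y m assume "x \<in> F1 ` S" "y \<in> F1 ` S" "0 \<le> m \<and> m \<le> (1::real)"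
    then obtain x' y' where "x' \<in> S" "y' \<in> S" "x = F1 x'" "y = F1 y'" by blast
    then show "(1 - m) *\<^sub>R x + m *\<^sub>R y \<in> F1 ` S"
      using assms(9) \<open>0 \<le> m \<and> m \<le> 1\<close> unfolding convex_alt by (metis F1lin image_eqI)
  qed
  have cpt0: "compact (F0 ` S)"
    by (rule compact_continuous_image[OF _ cS]) (unfold F0_def Wf_def Af_def Bf_def, intro continuous_intros)
  have cpt1: "compact (F1 ` S)"
    by (rule compact_continuous_image[OF _ cS]) (unfold F1_def Wf_def Af_def Bf_def, intro continuous_intros)
  define H where "H = convex hull (F0 ` S \<union> F1 ` S)"
  define N :: "(real \<times> real \<times> real) set" where "N = {z. fst z \<le> 0 \<and> 0 \<le> fst (snd z) \<and> snd (snd z) \<le> 0}"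
  show ?thesis
  proof (cases "H \<inter> N = {}")
    case False
    then obtain \<kappa> where k: "\<kappa> \<in> H" "\<kappa> \<in> N" by blast
    have ne: "F0 ` S \<noteq> {}" "F1 ` S \<noteq> {}" using assms(7) by auto
    obtain c d k0 k1 where cd: "c \<ge> 0" "d \<ge> 0" "c + d = 1" "k0 \<in> F0 ` S" "k1 \<in> F1 ` S"
      "\<kappa> = c *\<^sub>R k0 + d *\<^sub>R k1"
      using k(1) unfolding H_def convex_hull_union_two[OF cvx0 ne(1) cvx1 ne(2)] by blast
    then obtain xh yh where xy: "xh \<in> S" "yh \<in> S" "k0 = F0 xh" "k1 = F1 yh" by blast
    have c1: "c * (?W p0 xh - v) + d * (?W p1 yh - v) \<le> 0"
      and c2: "0 \<le> c * ?A p0 xh + d * ?A p1 yh"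
      and c3: "c * ?B p0 xh + d * ?B p1 yh \<le> 0"
      using k(2) cd(6) xy unfolding N_def F0_def F1_def by auto
    have g0: "0 \<le> ?W p0 \<sigma> - v" "0 \<le> ?W p1 \<sigma> - v" if "\<sigma> \<in> S" for \<sigma> using v0[OF that] by auto
    have t1: "0 \<le> c * (?W p0 xh - v)" "0 \<le> d * (?W p1 yh - v)"
      using g0[OF xy(1)] g0[OF xy(2)] cd(1,2) by auto
    have z1: "c * (?W p0 xh - v) = 0" "d * (?W p1 yh - v) = 0" using c1 t1 by linarith+
    show ?thesis
    proof (cases "c = 0")
      case True
      then have d1: "d = 1" using cd(3) by simp
      have "?W p1 yh = v" using z1(2) d1 by simp
      then have "obedient \<in> BR u P yh"
        using c2 c3 True d1 vP[OF xy(2)]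
        by (intro good[OF a seg seg(2)]) auto
      then show ?thesis using xy(2) by blast
    next
      case c0: False
      show ?thesis
      proof (cases "d = 0")
        case True
        then have c1': "c = 1" using cd(3) by simp
        have "?W p0 xh = v" using z1(1) c1' by simp
        then have "obedient \<in> BR u P xh"
          using c2 c3 True c1' vP[OF xy(1)]
          by (intro good[OF a seg seg(1)]) auto
        then show ?thesis using xy(1) by blast
      next
        case d0: False
        have Wx: "?W p0 xh = v" using z1(1) c0 by simp
        have Wy: "?W p1 yh = v" using z1(2) d0 by simp
        define gc where "gc = ?W p0 yh - v"
        define gd where "gd = ?W p1 xh - v"
        have gc0: "0 \<le> gc" "0 \<le> gd" unfolding gc_def gd_def using g0 xy by auto
        define \<theta> where "\<theta> = (if gc + gd = 0 then 0 else gd / (gc + gd))"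
        have th01: "0 \<le> \<theta>" "\<theta> \<le> 1" unfolding \<theta>_def using gc0 by (auto simp: field_simps)
        have thk: "\<theta> * gc = (1 - \<theta>) * gd"
        proof (cases "gc + gd = 0")
          case True then show ?thesis unfolding \<theta>_def using gc0 by simp
        next
          case False
          then have "gc + gd > 0" using gc0 by linarith
          then show ?thesis unfolding \<theta>_def using False by (simp add: field_simps)
        qed
        define xb where "xb = (1 - \<theta>) *\<^sub>R xh + \<theta> *\<^sub>R yh"
        have xbS: "xb \<in> S" using assms(9) xy(1,2) th01 unfolding xb_def convex_alt by blast
        define p where "p = (1 - d) *\<^sub>R p0 + d *\<^sub>R p1"
        have pP: "p \<in> P" using assms(5) seg(1,2) cd unfolding p_def convex_alt by auto
        have cx: "canon_experiment xh" "canon_experiment yh" using assms(10) xy(1,2) by auto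
        have W0b: "?W p0 xb = v + \<theta> * gc"
          unfolding xb_def Wf_lin_s gc_def Wx by (simp add: algebra_simps)
        have W1b: "?W p1 xb = v + (1 - \<theta>) * gd"
          unfolding xb_def Wf_lin_s gd_def Wy by (simp add: algebra_simps)
        have Weq: "?W p1 xb = ?W p0 xb" using W0b W1b thk by simp
        have A0: "?A p0 yh = ?A p0 xh + gc"
          using canon_WA(1)[OF a cx(1), of u p0] canon_WA(1)[OF a cx(2), of u p0] Wx unfolding gc_def by simp
        have A1: "?A p1 xh = ?A p1 yh + gd"
          using canon_WA(1)[OF a cx(1), of u p1] canon_WA(1)[OF a cx(2), of u p1] Wy unfolding gd_def by simp
        have B0: "?B p0 yh = ?B p0 xh - gc"
          using canon_WA(2)[OF a cx(1), of u p0] canon_WA(2)[OF a cx(2), of u p0] A0 by simp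
        have B1: "?B p1 xh = ?B p1 yh - gd"
          using canon_WA(2)[OF a cx(1), of u p1] canon_WA(2)[OF a cx(2), of u p1] A1 by simp
        have cdd: "c = 1 - d" using cd(3) by simp
        have pos1: "0 \<le> c * (\<theta> * gc)" "0 \<le> d * ((1 - \<theta>) * gd)"
          using cd(1,2) th01 gc0 by auto
        have Ab: "?A p xb = c * ?A p0 xh + d * ?A p1 yh + c * (\<theta> * gc) + d * ((1 - \<theta>) * gd)"
          unfolding p_def xb_def Af_lin_p Af_lin_s A0 A1 cdd by (simp add: algebra_simps)
        have Bb: "?B p xb = c * ?B p0 xh + d * ?B p1 yh - c * (\<theta> * gc) - d * ((1 - \<theta>) * gd)"
          unfolding p_def xb_def Bf_lin_p Bf_lin_s B0 B1 cdd by (simp add: algebra_simps)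
        have minp: "\<forall>p'\<in>P. ?W p xb \<le> ?W p' xb"
        proof
          fix p' assume "p' \<in> P"
          then obtain m where m: "p' = (1 - m) *\<^sub>R p0 + m *\<^sub>R p1" using seg(3) by blast
          show "?W p xb \<le> ?W p' xb" unfolding m p_def Wf_lin_p Weq by (simp add: algebra_simps)
        qed
        have "obedient \<in> BR u P xb"
          by (rule good[OF a seg pP minp]) (use Ab Bb c2 c3 pos1 in linarith)+
        then show ?thesis using xbS by blast
      qed
    qed
  next
    case True
    have cvN: "convex N" unfolding N_def convex_alt
    proof (intro ballI allI impI CollectI conjI)
      fix x y :: "real \<times> real \<times> real" and m :: real
      assume x: "x \<in> {z. fst z \<le> 0 \<and> 0 \<le> fst (snd z) \<and> snd (snd z) \<le> 0}"
        and y: "y \<in> {z. fst z \<le> 0 \<and> 0 \<le> fst (snd z) \<and> snd (snd z) \<le> 0}" and m: "0 \<le> m \<and> m \<le> 1"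
      have "0 \<le> 1 - m" using m by simp
      then show "fst ((1 - m) *\<^sub>R x + m *\<^sub>R y) \<le> 0" "0 \<le> fst (snd ((1 - m) *\<^sub>R x + m *\<^sub>R y))"
        "snd (snd ((1 - m) *\<^sub>R x + m *\<^sub>R y)) \<le> 0"
        using x y m by (auto intro!: add_nonpos_nonpos add_nonneg_nonneg mult_nonneg_nonpos mult_nonneg_nonneg)
    qed
    have clN: "closed N" unfolding N_def
      by (intro closed_Collect_conj closed_Collect_le continuous_intros)
    have cH: "compact H" unfolding H_def by (intro compact_convex_hull compact_Un cpt0 cpt1)
    have vH: "convex H" unfolding H_def by simp
    have neH: "H \<noteq> {}" unfolding H_def using assms(7) by simp
    obtain l b where lb: "\<forall>x\<in>N. inner l x < b" "\<forall>x\<in>H. b < inner l x"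
      using separating_hyperplane_closed_compact[OF cvN clN vH cH neH] True by (auto simp: Int_commute)
    obtain l1 l2 l3 where l: "l = (l1, l2, l3)" by (cases l) auto
    have inn: "inner l (x, y, z) = l1 * x + l2 * y + l3 * z" for x y z unfolding l by simp
    have bpos: "0 < b" using lb(1) inn[of 0 0 0] unfolding N_def by force
    have l1: "0 \<le> l1"
    proof (rule ccontr)
      assume "\<not> 0 \<le> l1"
      then have "(b / l1, 0, 0) \<in> N" unfolding N_def using bpos by (simp add: divide_pos_neg less_imp_le)
      then show False using lb(1) inn[of "b / l1" 0 0] \<open>\<not> 0 \<le> l1\<close> by force
    qed
    have l2: "l2 \<le> 0"
    proof (rule ccontr)
      assume "\<not> l2 \<le> 0"
      then have "(0, b / l2, 0) \<in> N" unfolding N_def using bpos by simp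
      then show False using lb(1) inn[of 0 "b / l2" 0] \<open>\<not> l2 \<le> 0\<close> by force
    qed
    have l3: "0 \<le> l3"
    proof (rule ccontr)
      assume "\<not> 0 \<le> l3"
      then have "(0, 0, b / l3) \<in> N" unfolding N_def using bpos by (simp add: divide_pos_neg less_imp_le)
      then show False using lb(1) inn[of 0 0 "b / l3"] \<open>\<not> 0 \<le> l3\<close> by force
    qed
    define e where "e = 1 / (1 + l1 - l2 + l3)"
    have epos: "0 < e" unfolding e_def using l1 l2 l3 by simp
    have e1: "e * l1 \<le> 1" "- (e * l2) \<le> 1" "e * l3 \<le> 1"
      unfolding e_def using l1 l2 l3 by (auto simp: field_simps)
    have e2: "0 \<le> e * l1" "e * l2 \<le> 0" "0 \<le> e * l3"
      using epos l1 l2 l3 by (auto intro: mult_nonneg_nonneg mult_nonneg_nonpos)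
    define s where "s = 1 + e * l2"
    define t where "t = e * l3"
    define \<tau> :: "real^'a^'a" where "\<tau> = (\<chi> m a'. if m = a1 then (if a' = a1 then s else 1 - s) else (if a' = a1 then t else 1 - t))"
    have st01: "0 \<le> s" "s \<le> 1" "0 \<le> t" "t \<le> 1" unfolding s_def t_def using e1 e2 by auto
    have allA: "\<And>x. x = a1 \<or> x = a2" using a(2) by blast
    have stg: "strategy \<tau>" unfolding strategy_def is_dist_def
    proof (intro allI conjI)
      fix m i :: 'a
      show "0 \<le> \<tau>$m$i" unfolding \<tau>_def using st01 by auto
      show "(\<Sum>i\<in>UNIV. \<tau>$m$i) = 1" unfolding sum_two[OF a] \<tau>_def using a(1) allA[of m] by auto
    qed
    have ts: "\<tau>$a1$a1 = s" "\<tau>$a2$a1 = t" unfolding \<tau>_def using a(1) by auto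
    have key: "v + e * b \<le> ur_p u q \<sigma> \<tau>" if sS: "\<sigma> \<in> S" and q: "q = p0 \<or> q = p1" for \<sigma> q
    proof -
      define k where "k = (?W q \<sigma> - v, ?A q \<sigma>, ?B q \<sigma>)"
      have "k \<in> F0 ` S \<union> F1 ` S" using q sS unfolding k_def F0_def F1_def by auto
      then have "k \<in> H" unfolding H_def by (rule hull_inc)
      then have X: "b < l1 * (?W q \<sigma> - v) + l2 * ?A q \<sigma> + l3 * ?B q \<sigma>"
        using lb(2) inn unfolding k_def by auto
      have Wv: "0 \<le> ?W q \<sigma> - v" using v0[OF sS] q by auto
      have P1: "0 \<le> (1 - e * l1) * (?W q \<sigma> - v)" using e1 Wv by simp
      have P2: "e * b < e * (l1 * (?W q \<sigma> - v) + l2 * ?A q \<sigma> + l3 * ?B q \<sigma>)"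
        using X epos by simp
      have "ur_p u q \<sigma> \<tau> = ?W q \<sigma> - (1 - s) * ?A q \<sigma> + t * ?B q \<sigma>"
        using ur_p_form[OF a stg] ts by simp
      also have "\<dots> = v + (1 - e * l1) * (?W q \<sigma> - v) + e * (l1 * (?W q \<sigma> - v) + l2 * ?A q \<sigma> + l3 * ?B q \<sigma>)"
        unfolding s_def t_def by (simp add: algebra_simps)
      finally show ?thesis using P1 P2 by linarith
    qed
    have "v + e * b \<le> UR u P S \<tau>"
      unfolding UR_def
    proof (rule cINF_greatest[OF assms(7)])
      fix \<sigma> assume "\<sigma> \<in> S"
      then show "v + e * b \<le> ur u P \<sigma> \<tau>" using ur_min[OF seg, of u \<sigma> \<tau>] key by simp
    qed
    moreover have "UR u P S \<tau> \<le> UR u P S obedient" using assms(11) stg unfolding BR_amb_def by blast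
    moreover have "0 < e * b" using epos bpos by simp
    ultimately show ?thesis using URob by linarith
  qed
qed

end
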